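(* Let $x_1,\dots,x_n\ge0$ be real numbers and $P_n(z)=(z-x_1)\cdots(z-x_n)$. Then $d_1\big(Z(P_n),Z(P_n')\cup\{0\}\big)=\frac1n\sum_{i=1}^n x_i$.
   Context: For a polynomial $P$, $Z(P)$ is the multiset of its zeros (with multiplicity); $Z(P_n')\cup\{0\}$ denotes the multiset of the $n-1$ critical points of $P_n$ together with one additional point $0$. For multisets $U=\{u_1,\dots,u_n\}$, $V=\{v_1,\dots,v_n\}$, $d_1(U,V)=\min_{\pi\in\mathfrak{S}_n}\sum_{i=1}^n|u_i-v_{\pi(i)}|$. *)

theory Defs
  imports "HOL-Computational_Algebra.Computational_Algebra" "HOL-Library.Multiset"
begin

text \<open>Z(P): multiset of complex zeros with multiplicity is the library's proots.
  d_1 distance between multisets of equal size n: minimum over permutations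
  pi of sum |u_i - v_(pi i)|.  We fix an enumeration us of U and range over all
  enumerations vs of V, which is exactly ranging over all permutations.\<close>

definition d1 :: "complex multiset \<Rightarrow> complex multiset \<Rightarrow> real" where
  "d1 U V = Min {(\<Sum>i<size U. cmod (us ! i - vs ! i)) | us vs.
                   mset us = U \<and> mset vs = V}"

end

theory Submission
  imports Defs "HOL-Combinatorics.Multiset_Permutations"
begin
lemma mp_mult: "map_poly (of_real::real\<Rightarrow>complex) (p*q) = map_poly of_real p * map_poly of_real q"
  by (intro poly_eqI) (simp add: coeff_map_poly coeff_mult)

lemma mp_power: "map_poly (of_real::real\<Rightarrow>complex) (p^k) = (map_poly of_real p)^k"
  by (induction k) (simp_all add: mp_mult)

lemma mp_prod: "map_poly (of_real::real\<Rightarrow>complex) (\<Prod>i\<in>I. f i) = (\<Prod>i\<in>I. map_poly of_real (f i))"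
  by (induction I rule: infinite_finite_induct) (simp_all add: mp_mult)

lemma mp_pderiv: "pderiv (map_poly (of_real::real\<Rightarrow>complex) p) = map_poly of_real (pderiv p)"
  by (intro poly_eqI) (simp add: coeff_map_poly coeff_pderiv)

lemma mp_linear: "map_poly (of_real::real\<Rightarrow>complex) [:-a,1:] = [:-of_real a, 1:]"
  by (simp add: map_poly_pCons)

lemma mp_eq0[simp]: "map_poly (of_real::real\<Rightarrow>complex) r = 0 \<longleftrightarrow> r = 0"
  by (rule map_poly_eq_0_iff) auto

lemma count_image_of_real: "count (image_mset (of_real::real\<Rightarrow>complex) M) (of_real b) = count M b"
  by (induction M) auto

lemma order_mp: assumes "r \<noteq> 0"
  shows "order b r \<le> order (of_real b) (map_poly (of_real::real\<Rightarrow>complex) r)"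
proof -
  obtain s where s: "r = [:-b,1:]^order b r * s" using order_1 by (metis dvdE)
  have "map_poly (of_real::real\<Rightarrow>complex) r = [:-of_real b,1:]^order b r * map_poly of_real s"
    by (subst s) (simp add: mp_mult mp_power mp_linear)
  hence "[:-of_real b,1:]^order b r dvd map_poly (of_real::real\<Rightarrow>complex) r" by simp
  thus ?thesis using assms by (simp add: order_divides)
qed

lemma proots_mp:
  assumes "r \<noteq> 0" "size (proots r) = degree r"
  shows "proots (map_poly (of_real::real\<Rightarrow>complex) r) = image_mset of_real (proots r)"
proof -
  let ?R = "map_poly (of_real::real\<Rightarrow>complex) r"
  have R0: "?R \<noteq> 0" using assms(1) by simp
  have sub: "image_mset of_real (proots r) \<subseteq># proots ?R"
  proof (rule mset_subset_eqI)
    fix z :: complex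
    show "count (image_mset of_real (proots r)) z \<le> count (proots ?R) z"
    proof (cases "z \<in> range of_real")
      case True
      then obtain b where b: "z = of_real b" by auto
      have "count (image_mset of_real (proots r)) z = count (proots r) b"
        unfolding b by (rule count_image_of_real)
      also have "\<dots> = order b r" using assms(1) by simp
      also have "\<dots> \<le> order z ?R" unfolding b by (rule order_mp[OF assms(1)])
      finally show ?thesis using R0 by simp
    next
      case False
      hence "count (image_mset of_real (proots r)) z = 0" by (auto simp: count_eq_zero_iff)
      thus ?thesis by simp
    qed
  qed
  have "size (proots ?R) = degree r" by (simp add: size_proots_complex degree_map_poly)
  hence "size (image_mset of_real (proots r)) = size (proots ?R)" using assms(2) by simp
  with sub show ?thesis
    by (metis mset_subset_size subset_mset.le_less nat_less_le)
qed

definition cnt :: "real multiset \<Rightarrow> real \<Rightarrow> nat" where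
  "cnt M t = size {#a \<in># M. a \<le> t#}"

lemma cnt_C1:
  assumes "t1 < s" "s < t2"
  shows "cnt M t1 + count M s + count M t2 \<le> cnt M t2"
proof -
  have "{#a \<in># M. a \<le> t1#} + {#a \<in># M. a = s#} + {#a \<in># M. a = t2#} \<subseteq># {#a \<in># M. a \<le> t2#}"
    using assms by (intro mset_subset_eqI) auto
  from size_mset_mono[OF this] show ?thesis
    by (simp add: cnt_def filter_eq_replicate_mset)
qed

lemma cnt_C2: "count M r \<le> cnt M r"
proof -
  have "{#a \<in># M. a = r#} \<subseteq># {#a \<in># M. a \<le> r#}"
    by (intro mset_subset_eqI) auto
  from size_mset_mono[OF this] show ?thesis
    by (simp add: cnt_def filter_eq_replicate_mset)
qed

lemma cnt_C3: "r \<le> t \<Longrightarrow> cnt M r \<le> cnt M t"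
  unfolding cnt_def by (intro size_mset_mono mset_subset_eqI) auto

lemma cnt_C4: assumes "\<And>a. a \<in># M \<Longrightarrow> r < a \<Longrightarrow> t < a" "r \<le> t"
  shows "cnt M t = cnt M r"
proof -
  have "{#a \<in># M. a \<le> t#} = {#a \<in># M. a \<le> r#}"
    using assms by (intro filter_mset_cong) force+
  thus ?thesis by (simp add: cnt_def)
qed

lemma cnt_C0: assumes "\<And>a. a \<in># M \<Longrightarrow> t < a" shows "cnt M t = 0"
proof -
  have "{#a \<in># M. a \<le> t#} = {#}"
    using assms by (auto simp: filter_mset_eq_conv) (meson not_less)
  thus ?thesis by (simp add: cnt_def)
qed

lemma cnt_C5: assumes "r' < r" "\<And>a. a \<in># M \<Longrightarrow> r' < a \<Longrightarrow> r \<le> a"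
  shows "cnt M r = cnt M r' + count M r"
proof -
  have "{#a \<in># M. a \<le> r#} = {#a \<in># M. a \<le> r'#} + {#a \<in># M. a = r#}"
  proof (rule multiset_eqI)
    fix x show "count {#a \<in># M. a \<le> r#} x = count ({#a \<in># M. a \<le> r'#} + {#a \<in># M. a = r#}) x"
      using assms by (cases "x \<in># M") (auto simp: not_in_iff, force)
  qed
  thus ?thesis by (simp add: cnt_def filter_eq_replicate_mset)
qed

lemma rolle_count:
  fixes q :: "real poly"
  assumes q0: "q \<noteq> 0" and d0: "pderiv q \<noteq> 0"
  shows "cnt (proots q) t \<le> cnt (proots (pderiv q)) t + 1"
proof -
  define R where "R = proots q"
  define D where "D = proots (pderiv q)"
  have fin: "finite (set_mset R)" by simp
  have "\<forall>t. card {a \<in> set_mset R. a \<le> t} = k \<longrightarrow> cnt R t \<le> cnt D t + 1" for k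
  proof (induction k rule: less_induct)
    case (less k)
    show ?case
    proof (intro allI impI)
      fix t assume k: "card {a \<in> set_mset R. a \<le> t} = k"
      define S where "S = {a \<in> set_mset R. a \<le> t}"
      have finS: "finite S" unfolding S_def by simp
      show "cnt R t \<le> cnt D t + 1"
      proof (cases "S = {}")
        case True
        hence "cnt R t = 0" by (intro cnt_C0) (auto simp: S_def not_le)
        thus ?thesis by simp
      next
        case False
        define r where "r = Max S"
        have rS: "r \<in> S" unfolding r_def using finS False by (rule Max_in)
        have rmax: "\<And>a. a \<in> S \<Longrightarrow> a \<le> r" unfolding r_def using finS by simp
        have rR: "r \<in># R" "r \<le> t" using rS by (auto simp: S_def)
        have ct: "cnt R t = cnt R r"
          by (rule cnt_C4) (use rmax rR in \<open>force simp: S_def\<close>)+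
        have rq: "poly q r = 0" using rR q0 by (simp add: R_def)
        have ord: "order r q = Suc (order r (pderiv q))" by (rule order_pderiv[OF q0 rq])
        have cR: "count R r = Suc (count D r)" using ord q0 d0 by (simp add: R_def D_def)
        have Dt: "cnt D r \<le> cnt D t" using rR by (intro cnt_C3) auto
        define S' where "S' = {a \<in> set_mset R. a < r}"
        show ?thesis
        proof (cases "S' = {}")
          case True
          have "cnt R r = cnt R (r - 1) + count R r"
            by (rule cnt_C5) (use True in \<open>auto simp: S'_def\<close>)
          moreover have "cnt R (r - 1) = 0"
            by (rule cnt_C0) (use True in \<open>force simp: S'_def\<close>)
          ultimately show ?thesis using ct cR cnt_C2[of D r] Dt by linarith
        next
          case False
          have finS': "finite S'" unfolding S'_def by simp
          define r' where "r' = Max S'"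
          have r'S: "r' \<in> S'" unfolding r'_def using finS' False by (rule Max_in)
          have r'max: "\<And>a. a \<in> S' \<Longrightarrow> a \<le> r'" unfolding r'_def using finS' by simp
          have r'R: "r' \<in># R" "r' < r" using r'S by (auto simp: S'_def)
          have gap: "\<And>a. a \<in># R \<Longrightarrow> r' < a \<Longrightarrow> r \<le> a"
            using r'max by (force simp: S'_def)
          have c5: "cnt R r = cnt R r' + count R r" by (rule cnt_C5[OF r'R(2) gap])
          have sub: "{a \<in> set_mset R. a \<le> r'} \<subset> S"
            using rS r'R rR by (auto simp: S_def) (metis (mono_tags, lifting) mem_Collect_eq not_le)
          have "card {a \<in> set_mset R. a \<le> r'} < k"
            using psubset_card_mono[OF finS sub] k by (simp add: S_def)
          with less have IH: "cnt R r' \<le> cnt D r' + 1" by blast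
          obtain s where s: "r' < s" "s < r" "poly q r - poly q r' = (r - r') * poly (pderiv q) s"
            using poly_MVT[OF r'R(2)] by blast
          have r'q: "poly q r' = 0" using r'R q0 by (simp add: R_def)
          have "poly (pderiv q) s = 0" using s(3) rq r'q r'R(2) by simp
          hence "count D s \<ge> 1" using d0 by (simp add: D_def order_root)
          moreover have "cnt D r' + count D s + count D r \<le> cnt D r"
            by (rule cnt_C1[OF s(1) s(2)])
          ultimately show ?thesis using ct c5 cR IH Dt by linarith
        qed
      qed
    qed
  qed
  thus ?thesis unfolding R_def D_def by blast
qed


lemma cnt_all: assumes "\<And>a. a \<in># M \<Longrightarrow> a \<le> t" shows "cnt M t = size M"
proof -
  have "{#a \<in># M. a \<le> t#} = M" using assms by (simp add: filter_mset_eq_conv)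
  thus ?thesis by (simp add: cnt_def)
qed

lemma cnt_size_all: assumes "cnt M t = size M" "a \<in># M" shows "a \<le> t"
proof -
  have sub: "{#a \<in># M. a \<le> t#} \<subseteq># M" by simp
  have "{#a \<in># M. a \<le> t#} = M"
  proof (rule ccontr)
    assume "{#a \<in># M. a \<le> t#} \<noteq> M"
    hence "{#a \<in># M. a \<le> t#} \<subset># M" using sub by (simp add: subset_mset.le_less)
    from mset_subset_size[OF this] assms(1) show False by (simp add: cnt_def)
  qed
  hence "a \<in># {#a \<in># M. a \<le> t#}" using assms(2) by simp
  thus ?thesis by simp
qed

lemma cnt_remove: assumes "m \<in># M" shows "cnt (M - {#m#}) t = cnt M t - (if m \<le> t then 1 else 0)"
proof -
  have "{#a \<in># M - {#m#}. a \<le> t#} = {#a \<in># M. a \<le> t#} - {#a \<in># {#m#}. a \<le> t#}" by simp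
  moreover have "{#a \<in># {#m#}. a \<le> t#} \<subseteq># {#a \<in># M. a \<le> t#}"
    using assms by (intro multiset_filter_mono) simp
  ultimately show ?thesis by (auto simp: cnt_def size_Diff_submset)
qed

lemma pairing:
  "size A = size B \<Longrightarrow> (\<forall>t. cnt A t \<le> cnt B t) \<Longrightarrow>
   \<exists>as bs. mset as = A \<and> mset bs = B \<and> (\<forall>i<length as. bs!i \<le> as!i)"
proof (induction "size A" arbitrary: A B)
  case 0
  thus ?case by (intro exI[of _ "[]"]) auto
next
  case (Suc k)
  have A0: "A \<noteq> {#}" "B \<noteq> {#}" using Suc.hyps(2) Suc.prems(1) by auto
  define a where "a = Max (set_mset A)"
  define b where "b = Max (set_mset B)"
  have aA: "a \<in># A" unfolding a_def using A0 by (intro Max_in) auto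
  have bB: "b \<in># B" unfolding b_def using A0 by (intro Max_in) auto
  have amax: "\<And>x. x \<in># A \<Longrightarrow> x \<le> a" unfolding a_def by simp
  have bmax: "\<And>x. x \<in># B \<Longrightarrow> x \<le> b" unfolding b_def by simp
  have "cnt A a = size A" by (rule cnt_all) (use amax in auto)
  hence "cnt B a \<ge> size B" using Suc.prems by metis
  hence "cnt B a = size B" using size_filter_mset_lesseq[of "\<lambda>x. x \<le> a" B] unfolding cnt_def by linarith
  hence ba: "b \<le> a" using cnt_size_all bB by blast
  define A' where "A' = A - {#a#}"
  define B' where "B' = B - {#b#}"
  have sA': "k = size A'" using Suc.hyps(2) aA by (simp add: A'_def size_Diff_submset)
  have sB': "size A' = size B'" using Suc.prems(1) aA bB by (simp add: A'_def B'_def size_Diff_submset)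
  have "\<forall>t. cnt A' t \<le> cnt B' t"
  proof
    fix t
    show "cnt A' t \<le> cnt B' t"
    proof (cases "b \<le> t")
      case True
      have "cnt B' t = size B'"
        by (rule cnt_all) (use bmax True in \<open>force simp: B'_def dest: in_diffD\<close>)
      thus ?thesis using sB' size_filter_mset_lesseq[of "\<lambda>x. x \<le> t" A'] by (simp add: cnt_def)
    next
      case False
      thus ?thesis using Suc.prems(2) ba by (simp add: A'_def B'_def cnt_remove aA bB)
    qed
  qed
  from Suc.hyps(1)[OF sA' sB' this] obtain as bs where
    ih: "mset as = A'" "mset bs = B'" "\<forall>i<length as. bs!i \<le> as!i" by blast
  have len: "length as = length bs" using ih sB' by (metis size_mset)
  show ?case
  proof (intro exI conjI)
    show "mset (as @ [a]) = A" using ih aA by (simp add: A'_def)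
    show "mset (bs @ [b]) = B" using ih bB by (simp add: B'_def)
    show "\<forall>i<length (as @ [a]). (bs @ [b]) ! i \<le> (as @ [a]) ! i"
      using ih(3) len ba by (auto simp: nth_append less_Suc_eq)
  qed
qed

lemma prod_lin:
  fixes A :: "'a::idom multiset"
  defines "p \<equiv> (\<Prod>a\<in>#A. [:-a,1:])"
  shows "p \<noteq> 0 \<and> proots p = A \<and> degree p = size A \<and> coeff p (size A) = 1 \<and>
         (size A \<ge> 1 \<longrightarrow> coeff p (size A - 1) = - sum_mset A)"
  unfolding p_def
proof (induction A)
  case empty
  thus ?case by simp
next
  case (add a A)
  define p where "p = (\<Prod>a\<in>#A. [:-a,1:])"
  have IH: "p \<noteq> 0" "proots p = A" "degree p = size A" "coeff p (size A) = 1"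
     "size A \<ge> 1 \<Longrightarrow> coeff p (size A - 1) = - sum_mset A"
    using add unfolding p_def by auto
  have eq: "(\<Prod>a\<in>#add_mset a A. [:-a,1:]) = smult (-a) p + pCons 0 p"
    by (simp add: p_def mult_pCons_left)
  have c0: "coeff p (Suc (size A)) = 0" using IH(3) by (simp add: coeff_eq_0)
  have l0: "[:-a,1:] \<noteq> 0" by simp
  have pr: "(\<Prod>a\<in>#add_mset a A. [:-a,1:]) = [:-a,1:] * p" by (simp add: p_def)
  show ?case
  proof (intro conjI impI)
    show "(\<Prod>a\<in>#add_mset a A. [:-a,1:]) \<noteq> 0" proof -
      have "(\<Prod>a\<in>#add_mset a A. [:-a,1:]) = [:-a,1:] * p" by (simp add: p_def)
      thus ?thesis using l0 IH(1) by (metis mult_eq_0_iff)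
    qed
    show "proots (\<Prod>a\<in>#add_mset a A. [:-a,1:]) = add_mset a A"
      unfolding pr proots_mult[OF l0 IH(1)] IH(2) by simp
    show "degree (\<Prod>a\<in>#add_mset a A. [:-a,1:]) = size (add_mset a A)"
      unfolding pr degree_mult_eq[OF l0 IH(1)] IH(3) by simp
    show "coeff (\<Prod>a\<in>#add_mset a A. [:-a,1:]) (size (add_mset a A)) = 1"
      unfolding eq using c0 IH(4) by simp
    show "coeff (\<Prod>a\<in>#add_mset a A. [:-a,1:]) (size (add_mset a A) - 1) = - sum_mset (add_mset a A)"
      unfolding eq using IH(4,5) by (cases "size A") (auto simp: coeff_pCons)
  qed
qed

lemma sum_mset_of_real: "sum_mset (image_mset (of_real::real\<Rightarrow>complex) M) = of_real (sum_mset M)"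
  by (induction M) auto

theorem mainTheorem12:
  fixes n :: nat and x :: "nat \<Rightarrow> real" and P :: "complex poly"
  assumes "n \<ge> 1"
    and "\<And>i. i < n \<Longrightarrow> x i \<ge> 0"
    and "P = (\<Prod>i<n. [:- complex_of_real (x i), 1:])"
  shows "d1 (proots P) (proots (pderiv P) + {#0#}) = (\<Sum>i<n. x i) / real n"
proof -
  define X where "X = image_mset x (mset_set {..<n})"
  define q :: "real poly" where "q = (\<Prod>a\<in>#X. [:-a,1:])"
  have sX: "size X = n" by (simp add: X_def)
  from prod_lin[of X] have q0: "q \<noteq> 0" and Rq: "proots q = X" and dq: "degree q = n"
    and cqn: "coeff q n = 1" and cqn1: "coeff q (n-1) = - sum_mset X"
    using assms(1) by (auto simp: q_def sX)
  have sumX: "sum_mset X = (\<Sum>i<n. x i)" by (simp add: X_def sum_unfold_sum_mset)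
  have Xnn: "\<And>a. a \<in># X \<Longrightarrow> a \<ge> 0" using assms(2) by (auto simp: X_def)
  have qprod: "(\<Prod>i<n. [:-x i,1:]) = q"
    by (simp add: q_def X_def prod_unfold_prod_mset image_mset.compositionality o_def)
  have Pq: "P = map_poly of_real q"
    unfolding assms(3) qprod[symmetric] mp_prod mp_linear ..
  define q' where "q' = pderiv q"
  have dq': "degree q' = n - 1" by (simp add: q'_def degree_pderiv dq)
  have cq': "coeff q' (n-1) = of_nat n" using assms(1) cqn by (simp add: q'_def coeff_pderiv)
  have q'0: "q' \<noteq> 0" using cq' assms(1) by auto
  define D where "D = proots q'"
  have rc: "cnt X t \<le> cnt D t + 1" for t
    using rolle_count[OF q0, of t] q'0 by (simp add: Rq D_def q'_def)
  have sD: "size D = n - 1"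
  proof -
    define T where "T = Max (set_mset X \<union> set_mset D)"
    have "cnt X T = size X" by (rule cnt_all) (simp add: T_def)
    moreover have "cnt D T \<le> size D" by (simp add: cnt_def)
    moreover have "size D \<le> n - 1" using size_proots_le[of q'] dq' by (simp add: D_def)
    ultimately show ?thesis using rc[of T] sX by linarith
  qed
  have PR: "proots P = image_mset of_real X"
    using proots_mp[OF q0] sX dq Rq by (simp add: Pq)
  have PD: "proots (pderiv P) = image_mset of_real D"
    using proots_mp[OF q'0] sD dq' by (simp add: Pq mp_pderiv q'_def[symmetric] D_def)
  have sumD: "sum_mset D = (real n - 1) * sum_mset X / real n"
  proof (cases "n = 1")
    case True thus ?thesis using sD by simp
  next
    case False
    hence n2: "n \<ge> 2" using assms(1) by simp
    define P' where "P' = pderiv P"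
    define C where "C = proots P'"
    have P'q: "P' = map_poly of_real q'" by (simp add: P'_def Pq mp_pderiv q'_def)
    have dP': "degree P' = n - 1" using dq' by (simp add: P'q degree_map_poly)
    have lP': "lead_coeff P' = of_nat n" using cq' dP' by (simp add: P'q coeff_map_poly)
    have sC: "size C = n - 1" using dP' by (simp add: C_def size_proots_complex)
    have dec: "smult (lead_coeff P') (\<Prod>z\<in>#C. [:-z,1:]) = P'"
      unfolding C_def by (rule complex_poly_decompose_multiset)
    have "coeff (\<Prod>z\<in>#C. [:-z,1:]) (size C - 1) = - sum_mset C"
      using prod_lin[of C] sC n2 by auto
    have e: "n - 2 = size C - 1" using sC n2 by simp
    have "coeff P' (n - 2) = coeff (smult (lead_coeff P') (\<Prod>z\<in>#C. [:-z,1:])) (size C - 1)"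
      by (metis dec e)
    also have "\<dots> = lead_coeff P' * coeff (\<Prod>z\<in>#C. [:-z,1:]) (size C - 1)"
      by (rule coeff_smult)
    finally have c1: "coeff P' (n - 2) = of_nat n * (- sum_mset C)"
      using lP' \<open>coeff (\<Prod>z\<in>#C. [:-z,1:]) (size C - 1) = - sum_mset C\<close> by simp
    have "coeff P' (n - 2) = of_real (coeff q' (n - 2))" by (simp add: P'q coeff_map_poly)
    also have "coeff q' (n - 2) = of_nat (n - 1) * coeff q (n - 1)"
      using n2 by (simp add: q'_def coeff_pderiv Suc_diff_Suc numeral_2_eq_2)
    finally have c2: "coeff P' (n - 2) = of_real (real (n - 1) * (- sum_mset X))"
      using cqn1 by simp
    have "sum_mset C = of_real (sum_mset D)" by (simp add: C_def P'_def PD sum_mset_of_real)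
    with c1 c2 have "of_real (real n * sum_mset D) = (of_real (real (n - 1) * sum_mset X) :: complex)"
      by (simp add: algebra_simps)
    hence "real n * sum_mset D = real (n - 1) * sum_mset X" using of_real_eq_iff by blast
    thus ?thesis using assms(1) by (simp add: field_simps of_nat_diff)
  qed
  define v where "v = (\<Sum>i<n. x i) / real n"
  have sXD: "sum_mset X - sum_mset D = v"
    using assms(1) by (simp add: sumD v_def sumX field_simps)
  have vnn: "v \<ge> 0" unfolding v_def using assms(2) by (intro divide_nonneg_nonneg sum_nonneg) auto
  define U where "U = proots P"
  define V where "V = proots (pderiv P) + {#0#}"
  have sU: "size U = n" by (simp add: U_def PR sX)
  have sV: "size V = n" using sD assms(1) by (simp add: V_def PD)
  define S where "S = {(\<Sum>i<size U. cmod (us ! i - vs ! i)) | us vs. mset us = U \<and> mset vs = V}"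
  have finS: "finite S"
  proof -
    have "S \<subseteq> (\<lambda>(us, vs). \<Sum>i<size U. cmod (us ! i - vs ! i)) ` (permutations_of_multiset U \<times> permutations_of_multiset V)"
      by (auto simp: S_def permutations_of_multiset_def)
    thus ?thesis by (rule finite_subset) simp
  qed
  have lower: "v \<le> s" if sS: "s \<in> S" for s
  proof -
    obtain us vs where uv: "mset us = U" "mset vs = V" "s = (\<Sum>i<size U. cmod (us ! i - vs ! i))"
      using sS unfolding S_def by blast
    have lus: "length us = n" using uv(1) sU by (metis size_mset)
    have lvs: "length vs = n" using uv(2) sV by (metis size_mset)
    have "sum_list us = of_real (sum_mset X)"
      by (simp add: sum_mset_sum_list[symmetric] uv(1) U_def PR sum_mset_of_real)
    moreover have "sum_list vs = of_real (sum_mset D)"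
      by (simp add: sum_mset_sum_list[symmetric] uv(2) V_def PD sum_mset_of_real)
    ultimately have "(\<Sum>i<n. us ! i - vs ! i) = of_real v"
      using lus lvs sXD[symmetric] by (simp add: sum_subtractf sum_list_sum_nth atLeast0LessThan of_real_diff)
    hence "cmod (\<Sum>i<n. us ! i - vs ! i) = v" using vnn by simp
    moreover have "cmod (\<Sum>i<n. us ! i - vs ! i) \<le> (\<Sum>i<n. cmod (us ! i - vs ! i))"
      by (rule norm_sum)
    ultimately show ?thesis using uv(3) sU by simp
  qed
  have cntV: "cnt X t \<le> cnt (D + {#0#}) t" for t
  proof (cases "t < 0")
    case True
    have "cnt X t = 0" by (rule cnt_C0) (use Xnn True in force)
    thus ?thesis by simp
  next
    case False
    thus ?thesis using rc[of t] by (simp add: cnt_def)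
  qed
  obtain as bs where ab: "mset as = X" "mset bs = D + {#0#}" "\<forall>i<length as. bs ! i \<le> as ! i"
    using pairing[of X "D + {#0#}"] cntV sX sD assms(1) by auto
  have las: "length as = n" using ab(1) sX by (metis size_mset)
  have lbs: "length bs = n" proof -
    have "length bs = size (D + {#0#})" using ab(2) by (metis size_mset)
    thus ?thesis using sD assms(1) by simp
  qed
  define us where "us = map (of_real::real\<Rightarrow>complex) as"
  define vs where "vs = map (of_real::real\<Rightarrow>complex) bs"
  have mus: "mset us = U" by (simp add: us_def U_def PR ab(1))
  have mvs: "mset vs = V" by (simp add: vs_def V_def PD ab(2))
  have "(\<Sum>i<size U. cmod (us ! i - vs ! i)) = (\<Sum>i<n. as ! i - bs ! i)"
  proof (rule sum.cong)
    fix i assume "i \<in> {..<n}"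
    hence i: "i < n" by simp
    have "us ! i - vs ! i = of_real (as ! i - bs ! i)" using i las lbs by (simp add: us_def vs_def)
    moreover have "bs ! i \<le> as ! i" using ab(3) las i by simp
    ultimately show "cmod (us ! i - vs ! i) = as ! i - bs ! i" by (simp only: norm_of_real)
  qed (simp add: sU)
  also have "\<dots> = sum_list as - sum_list bs"
    using las lbs by (simp add: sum_subtractf sum_list_sum_nth atLeast0LessThan)
  also have "\<dots> = v" using sXD by (simp add: sum_mset_sum_list[symmetric] ab(1,2))
  finally have vS: "v \<in> S" using mus mvs unfolding S_def by blast
  have "Min S = v" by (rule Min_eqI[OF finS lower vS])
  thus ?thesis by (simp add: d1_def S_def U_def V_def v_def)
qed

end
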